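(* Let $Z = (G, c) \subseteq \mathbb{R}^{n_x}$ be a zonotope with $G = [g_1, \dots, g_N]$, let $W \subseteq \mathbb{R}^{n_w}$ be a polytope with vertex set $V = \{w_1, \dots, w_M\}$ ($W$ is the convex hull of $V$), let $E \in \mathbb{R}^{n_x \times n_w}$, and let $H \in \mathbb{R}^{L \times n_x}$, $h \in \mathbb{R}^L$ satisfy $EW = \{x \mid Hx \leq h\}$. Let $b_1, \dots, b_N > 0$ and $d_1, \dots, d_N \geq 0$ be constants. Let $(\theta, \overline{\alpha}, \overline{c})$ be a minimizer of $$\min_{\theta, \alpha, c'} \sum_{i=1}^N b_i \alpha_i \ \text{ s.t. } \ \forall j: c' + \sum_{i=1}^N \theta_{ij} g_i = E w_j, \ |\theta_{ij}| \leq \alpha_i \leq 1 \ (i=1,\dots,N),$$ and set $\overline{\mathfrak{Z}}(Z, EW) = ([\overline{\alpha}_1 g_1, \dots, \overline{\alpha}_N g_N], \overline{c})$. Let $(\underline{\alpha}, \underline{c})$ be a maximizer of $$\max_{\alpha, c'} \sum_{i=1}^N d_i \log(\alpha_i) \ \text{ s.t. } \ H c' + |HG|\alpha \leq h, \ 0 \leq \alpha \leq 1,$$ and set $\underline{\mathfrak{Z}}(Z, EW) = ([\underline{\alpha}_1 g_1, \dots, \underline{\alpha}_N g_N], \underline{c})$. Then $$Z \ominus \overline{\mathfrak{Z}}(Z, EW) \subseteq Z \ominus EW \subseteq Z \ominus \underline{\mathfrak{Z}}(Z, EW),$$ and moreover $Z \ominus \overline{\mathfrak{Z}}(Z, EW)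 = ([(1-\overline{\alpha}_1) g_1, \dots, (1-\overline{\alpha}_N) g_N], c - \overline{c})$ and $Z \ominus \underline{\mathfrak{Z}}(Z, EW) = ([(1-\underline{\alpha}_1) g_1, \dots, (1-\underline{\alpha}_N) g_N], c - \underline{c})$.
   Context: A zonotope with generator-representation $(G, c)$, where $G = [g_1, \dots, g_N] \in \mathbb{R}^{n \times N}$ and $c \in \mathbb{R}^n$, is the set $\{c + \sum_{i=1}^N \theta_i g_i \mid \theta_i \in [-1,1]\}$; it is denoted $(G, c)$. $EW = \{Ew \mid w \in W\}$; $|HG|$ is the entrywise absolute value of $HG$; vector inequalities are entrywise. The Minkowski difference is $X \ominus Y = \{z \mid z + Y \subseteq X\}$. *)

theory Defs
  imports "HOL-Analysis.Analysis" "HOL-Library.Extended_Real"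
begin

definition zonotope :: "('i::finite \<Rightarrow> 'a::real_vector) \<Rightarrow> 'a \<Rightarrow> 'a set" where
  "zonotope g c = {c + (\<Sum>i\<in>UNIV. \<theta> i *\<^sub>R g i) | \<theta>. \<forall>i. \<theta> i \<in> {-1..1}}"

definition minkowski_diff :: "'a::real_vector set \<Rightarrow> 'a set \<Rightarrow> 'a set" where
  "minkowski_diff X Y = {z. (\<lambda>y. z + y) ` Y \<subseteq> X}"

text \<open>Feasible set of the outer (minimisation) problem; theta i w is theta_{ij} for vertex w = w_j.\<close>
definition outer_feasible ::
  "real^'nw^'nx \<Rightarrow> ('i::finite \<Rightarrow> real^'nx) \<Rightarrow> (real^'nw) set
   \<Rightarrow> ('i \<Rightarrow> real^'nw \<Rightarrow> real) \<Rightarrow> ('i \<Rightarrow> real) \<Rightarrow> real^'nx \<Rightarrow> bool" where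
  "outer_feasible E g V \<theta> \<alpha> c' \<longleftrightarrow>
     (\<forall>w\<in>V. c' + (\<Sum>i\<in>UNIV. \<theta> i w *\<^sub>R g i) = E *v w) \<and>
     (\<forall>i. (\<forall>w\<in>V. \<bar>\<theta> i w\<bar> \<le> \<alpha> i) \<and> \<alpha> i \<le> 1)"

definition outer_minimizer ::
  "('i::finite \<Rightarrow> real) \<Rightarrow> real^'nw^'nx \<Rightarrow> ('i \<Rightarrow> real^'nx) \<Rightarrow> (real^'nw) set
   \<Rightarrow> ('i \<Rightarrow> real^'nw \<Rightarrow> real) \<Rightarrow> ('i \<Rightarrow> real) \<Rightarrow> real^'nx \<Rightarrow> bool" where
  "outer_minimizer b E g V \<theta> \<alpha> c' \<longleftrightarrow>
     outer_feasible E g V \<theta> \<alpha> c' \<and>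
     (\<forall>\<theta>' \<alpha>' c''. outer_feasible E g V \<theta>' \<alpha>' c'' \<longrightarrow>
        (\<Sum>i\<in>UNIV. b i * \<alpha> i) \<le> (\<Sum>i\<in>UNIV. b i * \<alpha>' i))"

definition inner_feasible ::
  "real^'nx^'l \<Rightarrow> real^'l \<Rightarrow> ('i::finite \<Rightarrow> real^'nx) \<Rightarrow> ('i \<Rightarrow> real) \<Rightarrow> real^'nx \<Rightarrow> bool" where
  "inner_feasible H h g \<alpha> c' \<longleftrightarrow>
     (\<forall>l. (H *v c') $ l + (\<Sum>i\<in>UNIV. \<bar>(H *v g i) $ l\<bar> * \<alpha> i) \<le> h $ l) \<and>
     (\<forall>i. 0 \<le> \<alpha> i \<and> \<alpha> i \<le> 1)"

definition dlog :: "real \<Rightarrow> real \<Rightarrow> ereal" where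
  "dlog d a = (if 0 < a then ereal (d * ln a) else if d = 0 then 0 else -\<infinity>)"

definition inner_maximizer ::
  "('i::finite \<Rightarrow> real) \<Rightarrow> real^'nx^'l \<Rightarrow> real^'l \<Rightarrow> ('i \<Rightarrow> real^'nx)
   \<Rightarrow> ('i \<Rightarrow> real) \<Rightarrow> real^'nx \<Rightarrow> bool" where
  "inner_maximizer d H h g \<alpha> c' \<longleftrightarrow>
     inner_feasible H h g \<alpha> c' \<and>
     (\<forall>\<alpha>' c''. inner_feasible H h g \<alpha>' c'' \<longrightarrow>
        (\<Sum>i\<in>UNIV. dlog (d i) (\<alpha>' i)) \<le> (\<Sum>i\<in>UNIV. dlog (d i) (\<alpha> i)))"

end

theory Submission
  imports Defs
begin
lemma zono_convex:
  fixes g :: "'i::finite \<Rightarrow> 'a::real_vector"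
  shows "convex (zonotope g c)"
  unfolding convex_def zonotope_def
proof (clarify)
  fix u v :: real and \<theta> \<phi> :: "'i \<Rightarrow> real"
  assume u: "0 \<le> u" "0 \<le> v" "u + v = 1" and t: "\<forall>i. \<theta> i \<in> {-1..1}" and p: "\<forall>i. \<phi> i \<in> {-1..1}"
  let ?\<psi> = "\<lambda>i. u * \<theta> i + v * \<phi> i"
  have "u *\<^sub>R (c + (\<Sum>i\<in>UNIV. \<theta> i *\<^sub>R g i)) + v *\<^sub>R (c + (\<Sum>i\<in>UNIV. \<phi> i *\<^sub>R g i))
      = (u+v) *\<^sub>R c + (\<Sum>i\<in>UNIV. ?\<psi> i *\<^sub>R g i)"
    by (simp add: scaleR_add_right scaleR_add_left scaleR_sum_right sum.distrib scaleR_scaleR)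
  also have "\<dots> = c + (\<Sum>i\<in>UNIV. ?\<psi> i *\<^sub>R g i)" using u by simp
  finally have eq: "u *\<^sub>R (c + (\<Sum>i\<in>UNIV. \<theta> i *\<^sub>R g i)) + v *\<^sub>R (c + (\<Sum>i\<in>UNIV. \<phi> i *\<^sub>R g i))
      = c + (\<Sum>i\<in>UNIV. ?\<psi> i *\<^sub>R g i)" .
  have "\<forall>i. ?\<psi> i \<in> {-1..1}"
  proof
    fix i
    have a: "-1 \<le> \<theta> i" "\<theta> i \<le> 1" "-1 \<le> \<phi> i" "\<phi> i \<le> 1" using t p by auto
    have "u * (-1) \<le> u * \<theta> i" by (rule mult_left_mono) (use a u in auto)
    moreover have "u * \<theta> i \<le> u * 1" by (rule mult_left_mono) (use a u in auto)
    moreover have "v * (-1) \<le> v * \<phi> i" by (rule mult_left_mono) (use a u in auto)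
    moreover have "v * \<phi> i \<le> v * 1" by (rule mult_left_mono) (use a u in auto)
    ultimately show "?\<psi> i \<in> {-1..1}" using u by auto
  qed
  then show "\<exists>\<psi>. u *\<^sub>R (c + (\<Sum>i\<in>UNIV. \<theta> i *\<^sub>R g i)) + v *\<^sub>R (c + (\<Sum>i\<in>UNIV. \<phi> i *\<^sub>R g i)) =
          c + (\<Sum>i\<in>UNIV. \<psi> i *\<^sub>R g i) \<and> (\<forall>i. \<psi> i \<in> {-1..1})"
    using eq by (intro exI[of _ ?\<psi>]) simp
qed

lemma zono_compact:
  fixes g :: "'i::finite \<Rightarrow> 'a::euclidean_space"
  shows "compact (zonotope g c)"
proof -
  have "zonotope g c = (\<lambda>x::real^'i. c + (\<Sum>i\<in>UNIV. x $ i *\<^sub>R g i)) ` cbox (- 1) 1"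
  proof (rule set_eqI, rule iffI)
    fix z assume "z \<in> zonotope g c"
    then obtain \<theta> where z: "z = c + (\<Sum>i\<in>UNIV. \<theta> i *\<^sub>R g i)" "\<forall>i. \<theta> i \<in> {-1..1}"
      unfolding zonotope_def by blast
    have "vec_lambda \<theta> \<in> cbox (- 1) 1" using z(2) by (auto simp: mem_box_cart)
    then show "z \<in> (\<lambda>x::real^'i. c + (\<Sum>i\<in>UNIV. x $ i *\<^sub>R g i)) ` cbox (- 1) 1"
      using z(1) by (intro image_eqI[of _ _ "vec_lambda \<theta>"]) auto
  next
    fix z assume "z \<in> (\<lambda>x::real^'i. c + (\<Sum>i\<in>UNIV. x $ i *\<^sub>R g i)) ` cbox (- 1) 1"
    then obtain x :: "real^'i" where "x \<in> cbox (-1) 1" "z = c + (\<Sum>i\<in>UNIV. x $ i *\<^sub>R g i)" by blast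
    then show "z \<in> zonotope g c" unfolding zonotope_def by (auto simp: mem_box_cart)
  qed
  moreover have "compact ((\<lambda>x::real^'i. c + (\<Sum>i\<in>UNIV. x $ i *\<^sub>R g i)) ` cbox (- 1) 1)"
    by (intro compact_continuous_image continuous_intros compact_cbox)
  ultimately show ?thesis by simp
qed

lemma zono_nonempty: "c \<in> zonotope g c"
  unfolding zonotope_def by (rule CollectI, rule exI[of _ "\<lambda>_. 0"]) auto

lemma cancel:
  fixes A B :: "'a::euclidean_space set"
  assumes "convex A" "closed A" "compact B" "B \<noteq> {}"
    and "\<forall>y\<in>B. \<exists>a\<in>A. \<exists>b\<in>B. z + y = a + b"
  shows "z \<in> A"
proof (rule ccontr)
  assume "z \<notin> A"
  then obtain u \<beta> where s: "inner u z < \<beta>" "\<forall>x\<in>A. \<beta> < inner u x"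
    using separating_hyperplane_closed_point[OF assms(1,2)] by blast
  have cont: "continuous_on B (\<lambda>x. inner u x)" by (intro continuous_intros)
  obtain y where y: "y \<in> B" "\<forall>b\<in>B. inner u y \<le> inner u b"
    using continuous_attains_inf[OF assms(3,4) cont] by blast
  then obtain a b where ab: "a \<in> A" "b \<in> B" "z + y = a + b" using assms(5) by blast
  have e1: "inner u (z + y) = inner u z + inner u y" by (rule inner_add_right)
  have e2: "inner u (a + b) = inner u a + inner u b" by (rule inner_add_right)
  have "inner u a > \<beta>" using s(2) ab(1) by blast
  moreover have "inner u b \<ge> inner u y" using y(2) ab(2) by blast
  moreover have "inner u (z + y) = inner u (a + b)" using ab(3) by (rule arg_cong)
  ultimately show False using s(1) e1 e2 by linarith
qed

lemma coef_bound:
  fixes a t p :: real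
  assumes "0 \<le> a" "a \<le> 1" "\<bar>t\<bar> \<le> 1" "\<bar>p\<bar> \<le> 1"
  shows "\<bar>t * (1 - a) + p * a\<bar> \<le> 1"
proof -
  have "\<bar>t * (1 - a)\<bar> = \<bar>t\<bar> * (1 - a)" using assms(2) by (simp add: abs_mult)
  also have "\<dots> \<le> 1 * (1 - a)" by (rule mult_right_mono) (use assms in auto)
  finally have 1: "\<bar>t * (1 - a)\<bar> \<le> 1 - a" by simp
  have "\<bar>p * a\<bar> = \<bar>p\<bar> * a" using assms(1) by (simp add: abs_mult)
  also have "\<dots> \<le> 1 * a" by (rule mult_right_mono) (use assms in auto)
  finally have 2: "\<bar>p * a\<bar> \<le> a" by simp
  have "\<bar>t * (1 - a) + p * a\<bar> \<le> \<bar>t * (1 - a)\<bar> + \<bar>p * a\<bar>" by (rule abs_triangle_ineq)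
  then show ?thesis using 1 2 by linarith
qed

lemma mdiff_zono:
  fixes g :: "'i::finite \<Rightarrow> 'a::euclidean_space"
  assumes "\<forall>i. 0 \<le> \<alpha> i \<and> \<alpha> i \<le> 1"
  shows "minkowski_diff (zonotope g c) (zonotope (\<lambda>i. \<alpha> i *\<^sub>R g i) c')
       = zonotope (\<lambda>i. (1 - \<alpha> i) *\<^sub>R g i) (c - c')"
proof
  let ?A = "zonotope (\<lambda>i. (1 - \<alpha> i) *\<^sub>R g i) (c - c')"
  let ?B = "zonotope (\<lambda>i. \<alpha> i *\<^sub>R g i) c'"
  show "minkowski_diff (zonotope g c) ?B \<subseteq> ?A"
  proof
    fix z assume z: "z \<in> minkowski_diff (zonotope g c) ?B"
    show "z \<in> ?A"
    proof (rule cancel[OF zono_convex compact_imp_closed[OF zono_compact] zono_compact], 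
           use zono_nonempty in blast, intro ballI)
      fix y assume y: "y \<in> ?B"
      then have "z + y \<in> zonotope g c" using z unfolding minkowski_diff_def by blast
      then obtain \<theta> where t: "z + y = c + (\<Sum>i\<in>UNIV. \<theta> i *\<^sub>R g i)" "\<forall>i. \<theta> i \<in> {-1..1}"
        unfolding zonotope_def by blast
      define S1 where "S1 = (\<Sum>i\<in>UNIV. \<theta> i *\<^sub>R ((1 - \<alpha> i) *\<^sub>R g i))"
      define S2 where "S2 = (\<Sum>i\<in>UNIV. \<theta> i *\<^sub>R (\<alpha> i *\<^sub>R g i))"
      have tm: "\<theta> i *\<^sub>R ((1 - \<alpha> i) *\<^sub>R g i) + \<theta> i *\<^sub>R (\<alpha> i *\<^sub>R g i) = \<theta> i *\<^sub>R g i" for i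
      proof -
        have "\<theta> i *\<^sub>R ((1 - \<alpha> i) *\<^sub>R g i) + \<theta> i *\<^sub>R (\<alpha> i *\<^sub>R g i)
            = (\<theta> i * (1 - \<alpha> i) + \<theta> i * \<alpha> i) *\<^sub>R g i"
          by (simp only: scaleR_scaleR scaleR_add_left)
        also have "\<theta> i * (1 - \<alpha> i) + \<theta> i * \<alpha> i = \<theta> i" by (simp add: right_diff_distrib)
        finally show ?thesis .
      qed
      have "(\<Sum>i\<in>UNIV. \<theta> i *\<^sub>R g i) = S1 + S2"
        unfolding S1_def S2_def sum.distrib[symmetric] tm ..
      then have "z + y = (c - c' + S1) + (c' + S2)"
        unfolding t(1) by simp
      then have "z + y = (c - c' + (\<Sum>i\<in>UNIV. \<theta> i *\<^sub>R ((1 - \<alpha> i) *\<^sub>R g i)))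
                  + (c' + (\<Sum>i\<in>UNIV. \<theta> i *\<^sub>R (\<alpha> i *\<^sub>R g i)))"
        unfolding S1_def S2_def .
      moreover have "c - c' + (\<Sum>i\<in>UNIV. \<theta> i *\<^sub>R ((1 - \<alpha> i) *\<^sub>R g i)) \<in> ?A"
        using t(2) unfolding zonotope_def by blast
      moreover have "c' + (\<Sum>i\<in>UNIV. \<theta> i *\<^sub>R (\<alpha> i *\<^sub>R g i)) \<in> ?B"
        using t(2) unfolding zonotope_def by blast
      ultimately show "\<exists>a\<in>?A. \<exists>b\<in>?B. z + y = a + b" by blast
    qed
  qed
  show "?A \<subseteq> minkowski_diff (zonotope g c) ?B"
  proof (unfold minkowski_diff_def, clarify)
    fix z y assume z: "z \<in> ?A" and y: "y \<in> ?B"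
    obtain t where t: "z = c - c' + (\<Sum>i\<in>UNIV. t i *\<^sub>R ((1 - \<alpha> i) *\<^sub>R g i))" "\<forall>i. t i \<in> {-1..1}"
      using z unfolding zonotope_def by blast
    obtain p where p: "y = c' + (\<Sum>i\<in>UNIV. p i *\<^sub>R (\<alpha> i *\<^sub>R g i))" "\<forall>i. p i \<in> {-1..1}"
      using y unfolding zonotope_def by blast
    have "z + y = c + (\<Sum>i\<in>UNIV. (t i * (1 - \<alpha> i) + p i * \<alpha> i) *\<^sub>R g i)"
      unfolding t(1) p(1) by (simp add: sum.distrib[symmetric] scaleR_add_left)
    moreover have "\<forall>i. t i * (1 - \<alpha> i) + p i * \<alpha> i \<in> {-1..1}"
    proof
      fix i
      have "\<bar>t i * (1 - \<alpha> i) + p i * \<alpha> i\<bar> \<le> 1"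
        using assms t(2) p(2) by (intro coef_bound) (auto simp: abs_le_iff)
      then show "t i * (1 - \<alpha> i) + p i * \<alpha> i \<in> {-1..1}" by (auto simp: abs_le_iff)
    qed
    ultimately show "z + y \<in> zonotope g c" unfolding zonotope_def
      by (intro CollectI exI[of _ "\<lambda>i. t i * (1 - \<alpha> i) + p i * \<alpha> i"]) simp
  qed
qed

lemma mv_sum:
  fixes H :: "real^'n^'m" and f :: "'j \<Rightarrow> real^'n"
  shows "H *v (\<Sum>i\<in>S. f i) = (\<Sum>i\<in>S. H *v f i)"
  by (induction S rule: infinite_finite_induct) (auto simp: matrix_vector_right_distrib)

theorem proposition4:
  fixes g :: "'i::finite \<Rightarrow> real^'nx"
    and c :: "real^'nx"
    and W V :: "(real^'nw) set"
    and E :: "real^'nw^'nx"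
    and H :: "real^'nx^'l"
    and h :: "real^'l"
    and b d :: "'i \<Rightarrow> real"
    and \<theta> :: "'i \<Rightarrow> real^'nw \<Rightarrow> real"
    and \<alpha>o \<alpha>u :: "'i \<Rightarrow> real"
    and co cu :: "real^'nx"
  assumes "finite V"
    and "W = convex hull V"
    and "V = {v. v extreme_point_of W}"
    and "(\<lambda>w. E *v w) ` W = {x. \<forall>l. (H *v x) $ l \<le> h $ l}"
    and "\<forall>i. 0 < b i"
    and "\<forall>i. 0 \<le> d i"
    and "outer_minimizer b E g V \<theta> \<alpha>o co"
    and "inner_maximizer d H h g \<alpha>u cu"
  shows "minkowski_diff (zonotope g c) (zonotope (\<lambda>i. \<alpha>o i *\<^sub>R g i) co)
           \<subseteq> minkowski_diff (zonotope g c) ((\<lambda>w. E *v w) ` W)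
      \<and> minkowski_diff (zonotope g c) ((\<lambda>w. E *v w) ` W)
           \<subseteq> minkowski_diff (zonotope g c) (zonotope (\<lambda>i. \<alpha>u i *\<^sub>R g i) cu)
      \<and> minkowski_diff (zonotope g c) (zonotope (\<lambda>i. \<alpha>o i *\<^sub>R g i) co)
           = zonotope (\<lambda>i. (1 - \<alpha>o i) *\<^sub>R g i) (c - co)
      \<and> minkowski_diff (zonotope g c) (zonotope (\<lambda>i. \<alpha>u i *\<^sub>R g i) cu)
           = zonotope (\<lambda>i. (1 - \<alpha>u i) *\<^sub>R g i) (c - cu)"
proof -
  have anti: "minkowski_diff X Y \<subseteq> minkowski_diff X Y'" if "Y' \<subseteq> Y" for X Y Y' :: "(real^'nx) set"
    using that unfolding minkowski_diff_def by blast
  have of: "outer_feasible E g V \<theta> \<alpha>o co" using assms(7) unfolding outer_minimizer_def by blast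
  have Vne: "V \<noteq> {}"
  proof
    assume "V = {}"
    then have "outer_feasible E g V \<theta> (\<lambda>i. \<alpha>o i - 1) co" using of unfolding outer_feasible_def by (smt (verit) empty_iff)
    then have "(\<Sum>i\<in>UNIV. b i * \<alpha>o i) \<le> (\<Sum>i\<in>UNIV. b i * (\<alpha>o i - 1))"
      using assms(7) unfolding outer_minimizer_def by blast
    also have "\<dots> = (\<Sum>i\<in>UNIV. b i * \<alpha>o i) - (\<Sum>i\<in>UNIV. b i)"
      by (simp add: right_diff_distrib sum_subtractf)
    finally have "(\<Sum>i\<in>UNIV. b i) \<le> 0" by simp
    moreover have "(\<Sum>i\<in>UNIV. b i) > 0" using assms(5) by (intro sum_pos) auto
    ultimately show False by simp
  qed
  then obtain w0 where "w0 \<in> V" by blast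
  have ao: "\<forall>i. 0 \<le> \<alpha>o i \<and> \<alpha>o i \<le> 1"
  proof
    fix i
    have "\<bar>\<theta> i w0\<bar> \<le> \<alpha>o i" "\<alpha>o i \<le> 1" using of \<open>w0 \<in> V\<close> unfolding outer_feasible_def by auto
    then show "0 \<le> \<alpha>o i \<and> \<alpha>o i \<le> 1" by linarith
  qed
  have inf: "inner_feasible H h g \<alpha>u cu" using assms(8) unfolding inner_maximizer_def by blast
  have au: "\<forall>i. 0 \<le> \<alpha>u i \<and> \<alpha>u i \<le> 1" using inf unfolding inner_feasible_def by blast
  have EWo: "(\<lambda>w. E *v w) ` W \<subseteq> zonotope (\<lambda>i. \<alpha>o i *\<^sub>R g i) co"
  proof -
    have "(\<lambda>w. E *v w) ` W = convex hull ((\<lambda>w. E *v w) ` V)"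
      unfolding assms(2) by (rule convex_hull_linear_image) simp
    also have "\<dots> \<subseteq> zonotope (\<lambda>i. \<alpha>o i *\<^sub>R g i) co"
    proof (rule hull_minimal)
      show "convex (zonotope (\<lambda>i. \<alpha>o i *\<^sub>R g i) co)" by (rule zono_convex)
    next
      show "(\<lambda>w. E *v w) ` V \<subseteq> zonotope (\<lambda>i. \<alpha>o i *\<^sub>R g i) co"
      proof clarify
        fix w assume w: "w \<in> V"
        let ?t = "\<lambda>i. if \<alpha>o i = 0 then 0 else \<theta> i w / \<alpha>o i"
        have tb: "\<bar>\<theta> i w\<bar> \<le> \<alpha>o i" for i using of w unfolding outer_feasible_def by blast
        have eq: "?t i * \<alpha>o i = \<theta> i w" for i
        proof (cases "\<alpha>o i = 0")
          case True
          then show ?thesis using tb[of i] by simp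
        qed simp
        have bd: "?t i \<in> {-1..1}" for i
        proof (cases "\<alpha>o i = 0")
          case False
          have "0 \<le> \<alpha>o i" using ao by blast
          then have pos: "\<alpha>o i > 0" using False by linarith
          have "\<bar>\<theta> i w\<bar> / \<alpha>o i \<le> 1" using tb[of i] pos by (simp only: divide_le_eq_1) simp
          then have "\<bar>\<theta> i w / \<alpha>o i\<bar> \<le> 1" using abs_div_pos[OF pos, of "\<theta> i w"] by simp
          then have r1: "\<theta> i w / \<alpha>o i \<le> 1" and r2: "- (\<theta> i w / \<alpha>o i) \<le> 1"
            by (rule abs_le_D1, rule abs_le_D2)
          have "\<theta> i w / \<alpha>o i \<in> {-1..1}" unfolding atLeastAtMost_iff using r1 r2 by linarith
          then show ?thesis using False by (simp only: if_False)
        qed simp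
        have "co + (\<Sum>i\<in>UNIV. \<theta> i w *\<^sub>R g i) = E *v w" using of w unfolding outer_feasible_def by blast
        then have "E *v w = co + (\<Sum>i\<in>UNIV. \<theta> i w *\<^sub>R g i)" by (rule sym)
        also have "\<dots> = co + (\<Sum>i\<in>UNIV. ?t i *\<^sub>R (\<alpha>o i *\<^sub>R g i))"
          by (simp only: scaleR_scaleR eq)
        finally show "E *v w \<in> zonotope (\<lambda>i. \<alpha>o i *\<^sub>R g i) co"
          unfolding zonotope_def using bd by (intro CollectI exI[of _ ?t]) simp
      qed
    qed
    finally show ?thesis .
  qed
  have Zu: "zonotope (\<lambda>i. \<alpha>u i *\<^sub>R g i) cu \<subseteq> (\<lambda>w. E *v w) ` W"
  proof
    fix x assume "x \<in> zonotope (\<lambda>i. \<alpha>u i *\<^sub>R g i) cu"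
    then obtain p where p: "x = cu + (\<Sum>i\<in>UNIV. p i *\<^sub>R (\<alpha>u i *\<^sub>R g i))" "\<forall>i. p i \<in> {-1..1}"
      unfolding zonotope_def by blast
    have "(H *v x) $ l \<le> h $ l" for l
    proof -
      have "(H *v x) $ l = (H *v cu) $ l + (\<Sum>i\<in>UNIV. p i * \<alpha>u i * (H *v g i) $ l)"
      proof -
        have "H *v x = H *v cu + (\<Sum>i\<in>UNIV. (p i * \<alpha>u i) *\<^sub>R (H *v g i))"
          unfolding p(1) by (simp only: matrix_vector_right_distrib mv_sum matrix_vector_mult_scaleR scaleR_scaleR)
        then show ?thesis by (simp only: vector_add_component sum_component vector_scaleR_component real_scaleR_def)
      qed
      also have "\<dots> \<le> (H *v cu) $ l + (\<Sum>i\<in>UNIV. \<bar>(H *v g i) $ l\<bar> * \<alpha>u i)"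
      proof (intro add_left_mono sum_mono)
        fix i
        have "p i * \<alpha>u i * (H *v g i) $ l \<le> \<bar>p i * \<alpha>u i * (H *v g i) $ l\<bar>" by simp
        also have "\<dots> = \<bar>p i\<bar> * (\<alpha>u i * \<bar>(H *v g i) $ l\<bar>)" using au by (simp add: abs_mult)
        also have "\<dots> \<le> 1 * (\<alpha>u i * \<bar>(H *v g i) $ l\<bar>)"
          using p(2) au by (intro mult_right_mono) (auto simp: abs_le_iff)
        also have "\<dots> = \<bar>(H *v g i) $ l\<bar> * \<alpha>u i" by (simp only: mult_1_left mult.commute)
        finally show "p i * \<alpha>u i * (H *v g i) $ l \<le> \<bar>(H *v g i) $ l\<bar> * \<alpha>u i" .
      qed
      also have "\<dots> \<le> h $ l" using inf unfolding inner_feasible_def by blast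
      finally show ?thesis .
    qed
    then have "x \<in> {x. \<forall>l. (H *v x) $ l \<le> h $ l}" by simp
    then show "x \<in> (\<lambda>w. E *v w) ` W" unfolding assms(4) .
  qed
  show ?thesis by (rule conjI[OF anti[OF EWo] conjI[OF anti[OF Zu] conjI[OF mdiff_zono[OF ao] mdiff_zono[OF au]]]])
qed
end
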